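(* Let $X_1,X_2,\dots$ be iid real random variables with common continuous distribution function $F$, and suppose $F\in\mathcal{D}(G)$ with norming constants $a_n>0$, $b_n\in\mathbb{R}$. Then for every $x\in\mathbb{R}$ (at which $G$ is continuous), \[ \Pr\left(\frac{X_n-b_n}{a_n}\le x\ \Big|\ X_n\text{ is a record}\right)\to G(x),\qquad n\to\infty. \]
   Context: $X_m$ is a record if $X_m>\max(X_1,\dots,X_{m-1})$; $X_1$ is always a record. $F\in\mathcal{D}(G)$ (max-domain of attraction) means that there exist $a_n>0$, $b_n\in\mathbb{R}$ with $F^n(a_nx+b_n)\to G(x)$ as $n\to\infty$ at all continuity points $x$ of a non-degenerate distribution function $G$; then $G$ is a univariate extreme value distribution $G_\alpha(x)=\exp(-(1+\alpha x)^{-1/\alpha})$, $1+\alpha x>0$ (with $G_0(x)=\exp(-e^{-x})$), up to location and scale. *)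

theory Defs
  imports "HOL-Probability.Probability"
begin

text \<open>Records: X_1 is always a record; X_n is a record iff it exceeds X_1,...,X_{n-1}.
  Sequences are indexed from 1 (the value at index 0 is ignored).\<close>
definition is_record :: "(nat \<Rightarrow> 'a \<Rightarrow> real) \<Rightarrow> nat \<Rightarrow> 'a \<Rightarrow> bool" where
  "is_record X n \<omega> \<longleftrightarrow> (\<forall>i. 1 \<le> i \<and> i < n \<longrightarrow> X i \<omega> < X n \<omega>)"

definition distribution_function :: "(real \<Rightarrow> real) \<Rightarrow> bool" where
  "distribution_function G \<longleftrightarrow> mono G \<and> (\<forall>x. continuous (at_right x) G)
     \<and> (G \<longlongrightarrow> 0) at_bot \<and> (G \<longlongrightarrow> 1) at_top"

definition nondegenerate_df :: "(real \<Rightarrow> real) \<Rightarrow> bool" where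
  "nondegenerate_df G \<longleftrightarrow> distribution_function G
     \<and> \<not> (\<exists>c. \<forall>x. G x = (if x < c then 0 else 1))"

definition max_domain_attraction ::
  "(real \<Rightarrow> real) \<Rightarrow> (real \<Rightarrow> real) \<Rightarrow> (nat \<Rightarrow> real) \<Rightarrow> (nat \<Rightarrow> real) \<Rightarrow> bool" where
  "max_domain_attraction F G a b \<longleftrightarrow> nondegenerate_df G \<and> (\<forall>n. a n > 0)
     \<and> (\<forall>x. isCont G x \<longrightarrow> (\<lambda>n. F (a n * x + b n) ^ n) \<longlonglongrightarrow> G x)"

end

theory Submission
  imports Defs
begin

lemma key:
  fixes M :: "'a measure" and X :: "nat \<Rightarrow> 'a \<Rightarrow> real" and Q :: "real set" and n :: nat
    and F :: "real \<Rightarrow> real"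
  assumes P: "prob_space M"
    and meas: "\<And>i. i \<ge> 1 \<Longrightarrow> X i \<in> borel_measurable M"
    and ind: "prob_space.indep_vars M (\<lambda>_. borel) X {1..}"
    and Fd: "\<And>i t. i \<ge> 1 \<Longrightarrow> F t = measure M {\<omega> \<in> space M. X i \<omega> \<le> t}"
    and cont: "continuous_on UNIV F"
    and Q: "Q \<in> sets borel" "\<And>s s'. s \<in> Q \<Longrightarrow> s' \<le> s \<Longrightarrow> s' \<in> Q"
    and n: "n \<ge> 1"
  shows "measure M {\<omega> \<in> space M. X n \<omega> \<in> Q \<and> (\<forall>i\<in>{1..n}. i \<noteq> n \<longrightarrow> X i \<omega> < X n \<omega>)}
     = measure (distr M borel (X 1)) Q ^ n / n"
proof -
  interpret prob_space M by fact
  define \<mu> where "\<mu> = distr M borel (X 1)"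
  have rd: "real_distribution (distr M borel (X i))" if "i \<ge> 1" for i
    unfolding real_distribution_def real_distribution_axioms_def
    using meas[OF that] by (simp add: prob_space_distr)
  have cdf: "cdf (distr M borel (X i)) = F" if "i \<ge> 1" for i
  proof
    fix t
    show "cdf (distr M borel (X i)) t = F t"
      unfolding cdf_def2 Fd[OF that]
      using meas[OF that] by (subst measure_distr) (auto intro!: arg_cong[where f=prob])
  qed
  have mu_eq: "distr M borel (X i) = \<mu>" if "i \<ge> 1" for i
    unfolding \<mu>_def by (rule cdf_unique) (use rd cdf that in auto)
  have rdmu: "real_distribution \<mu>" using rd[of 1] by (simp add: \<mu>_def)
  interpret mu: real_distribution \<mu> by fact
  have cdfmu: "cdf \<mu> = F" using cdf[of 1] by (simp add: \<mu>_def)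
  have atom: "measure \<mu> {s} = 0" for s
  proof -
    interpret fb: finite_borel_measure \<mu> by (rule mu.finite_borel_measure_M)
    have "isCont F s" using cont by (simp add: continuous_on_eq_continuous_at)
    then show ?thesis using mu.isCont_cdf[of s] cdfmu by simp
  qed

  define I where "I = {1..n}"
  have I: "finite I" "I \<noteq> {}" "n \<in> I" "I \<subseteq> {1..}" using n by (auto simp: I_def)
  have cardI: "card I = n" by (simp add: I_def)
  have rvI: "random_variable borel (X i)" if "i \<in> I" for i using meas I(4) that by auto
  have indI: "indep_vars (\<lambda>_. borel) X I" using indep_vars_subset[OF ind I(4)] .
  define N where "N = PiM I (\<lambda>_. borel :: real measure)"
  define Y where "Y \<omega> = (\<lambda>i\<in>I. X i \<omega>)" for \<omega>
  define PP where "PP = PiM I (\<lambda>_. \<mu>)"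
  have Ymeas: "Y \<in> measurable M N"
    unfolding Y_def N_def by (rule measurable_restrict) (rule rvI)
  have distrY: "distr M N Y = PP"
  proof -
    have "distr M N Y = PiM I (\<lambda>i. distr M borel (X i))"
      using indep_vars_iff_distr_eq_PiM'[where I=I and M'="\<lambda>_. borel" and X=X] indI rvI I
      unfolding N_def Y_def by auto
    also have "\<dots> = PP" unfolding PP_def
      by (rule PiM_cong) (use mu_eq I(4) in auto)
    finally show ?thesis .
  qed
  have setsPi: "sets PP = sets N" unfolding PP_def N_def
    by (rule sets_PiM_cong) auto
  have spacePi: "space PP = space N" using setsPi by (rule sets_eq_imp_space_eq)
  define S where "S k = {y \<in> space N. y k \<in> Q \<and> (\<forall>i\<in>I. i \<noteq> k \<longrightarrow> y i < y k)}" for k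
  have Ssets: "S k \<in> sets N" if "k \<in> I" for k
  proof -
    have c: "(\<lambda>y. y i) \<in> borel_measurable N" if "i \<in> I" for i
      unfolding N_def using that by (rule measurable_component_singleton)
    have "{y \<in> space N. y k \<in> Q} \<in> sets N"
      using measurable_sets[OF c[OF \<open>k\<in>I\<close>] Q(1)] by (simp add: vimage_def Int_def conj_commute)
    moreover have "{y \<in> space N. \<forall>i\<in>I. i \<noteq> k \<longrightarrow> y i < y k} \<in> sets N"
    proof (rule sets.sets_Collect_finite_All[OF _ I(1)])
      fix i assume i: "i \<in> I"
      show "{y \<in> space N. i \<noteq> k \<longrightarrow> y i < y k} \<in> sets N"
      proof (cases "i = k")
        case False then show ?thesis using borel_measurable_less[OF c[OF i] c[OF that]] by simp
      qed simp
    qed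
    ultimately have "{y \<in> space N. y k \<in> Q} \<inter> {y \<in> space N. \<forall>i\<in>I. i \<noteq> k \<longrightarrow> y i < y k} \<in> sets N"
      by (rule sets.Int)
    also have "{y \<in> space N. y k \<in> Q} \<inter> {y \<in> space N. \<forall>i\<in>I. i \<noteq> k \<longrightarrow> y i < y k} = S k"
      unfolding S_def by auto
    finally show ?thesis .
  qed
  define A where "A k = {\<omega> \<in> space M. X k \<omega> \<in> Q \<and> (\<forall>i\<in>I. i \<noteq> k \<longrightarrow> X i \<omega> < X k \<omega>)}" for k
  have AY: "A k = Y -` S k \<inter> space M" if "k \<in> I" for k
    using measurable_space[OF Ymeas] that unfolding A_def S_def Y_def by auto
  have Aev: "A k \<in> events" if "k \<in> I" for k
    using AY[OF that] measurable_sets[OF Ymeas Ssets[OF that]] by simp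
  have probA: "prob (A k) = measure PP (S k)" if "k \<in> I" for k
    using AY[OF that] measure_distr[OF Ymeas Ssets[OF that]] distrY by simp
  have exch: "measure PP (S k) = measure PP (S n)" if k: "k \<in> I" for k
  proof -
    define \<sigma> where "\<sigma> i = (if i = k then n else if i = n then k else i)" for i
    have inj: "inj_on \<sigma> I" unfolding \<sigma>_def inj_on_def by auto
    have into: "\<sigma> \<in> I \<rightarrow> I" unfolding \<sigma>_def using k I(3) by auto
    define r where "r y = (\<lambda>m\<in>I. y (\<sigma> m))" for y :: "nat \<Rightarrow> real"
    have pr: "prob_space \<mu>" by (rule mu.prob_space_axioms)
    have dr: "distr PP PP r = PP"
      using distr_PiM_reindex[of I "\<lambda>_. \<mu>" \<sigma> I, OF pr inj into] unfolding PP_def r_def by simp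
    have rmeas: "r \<in> measurable PP PP"
      unfolding r_def PP_def
      by (rule measurable_restrict) (use into in \<open>auto intro!: measurable_component_singleton\<close>)
    have "measure PP (S n) = measure (distr PP PP r) (S n)" using dr by simp
    also have "\<dots> = measure PP (r -` S n \<inter> space PP)"
      by (rule measure_distr[OF rmeas]) (use Ssets I(3) setsPi in auto)
    also have "r -` S n \<inter> space PP = S k"
    proof (intro set_eqI iffI)
      fix y assume y: "y \<in> r -` S n \<inter> space PP"
      have sn: "\<sigma> n = k" by (simp add: \<sigma>_def)
      have ry: "r y \<in> S n" using y by auto
      then have yn: "y k \<in> Q" unfolding S_def r_def using I(3) sn by auto
      have lt: "y (\<sigma> i) < y k" if "i \<in> I" "i \<noteq> n" for i
        using ry that I(3) sn unfolding S_def r_def by auto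
      have "y j < y k" if "j \<in> I" "j \<noteq> k" for j
      proof -
        have "\<sigma> (\<sigma> j) = j" unfolding \<sigma>_def by auto
        moreover have "\<sigma> j \<in> I" using into that by auto
        moreover have "\<sigma> j \<noteq> n" using that unfolding \<sigma>_def by auto
        ultimately show ?thesis using lt[of "\<sigma> j"] by simp
      qed
      then show "y \<in> S k" using y yn spacePi unfolding S_def by auto
    next
      fix y assume y: "y \<in> S k"
      have "r y \<in> space N" unfolding r_def N_def space_PiM by auto
      moreover have "r y n \<in> Q" using y I(3) unfolding S_def r_def by (auto simp: \<sigma>_def)
      moreover have "r y i < r y n" if "i \<in> I" "i \<noteq> n" for i
      proof -
        have "\<sigma> i \<in> I" using into that by auto
        moreover have "\<sigma> i \<noteq> k" using that unfolding \<sigma>_def by auto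
        moreover have "\<sigma> n = k" by (simp add: \<sigma>_def)
        ultimately show ?thesis using y that I(3) unfolding S_def r_def by auto
      qed
      ultimately show "y \<in> r -` S n \<inter> space PP" using y spacePi unfolding S_def by auto
    qed
    finally show ?thesis by simp
  qed
  have disj: "disjoint_family_on A I"
    unfolding disjoint_family_on_def A_def by (fastforce simp: less_le_not_le)
  have U: "prob (\<Union>k\<in>I. A k) = n * prob (A n)"
  proof -
    have "prob (\<Union>k\<in>I. A k) = (\<Sum>k\<in>I. prob (A k))"
      by (rule finite_measure_finite_Union[OF I(1)]) (use Aev disj in auto)
    also have "\<dots> = (\<Sum>k\<in>I. prob (A n))"
      proof (rule sum.cong)
      fix k assume "k \<in> I" then show "prob (A k) = prob (A n)" using probA exch I(3) by metis
    qed simp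
    finally show ?thesis using cardI by simp
  qed
  define B where "B = {\<omega> \<in> space M. \<forall>i\<in>I. X i \<omega> \<in> Q}"
  have Bq: "prob B = measure \<mu> Q ^ n"
  proof -
    have "B = (\<Inter>i\<in>I. X i -` Q \<inter> space M)" unfolding B_def using I(2) by auto
    then have "prob B = (\<Prod>i\<in>I. prob (X i -` Q \<inter> space M))"
      using indep_varsD[OF indI I(2) I(1) subset_refl, of "\<lambda>_. Q"] Q(1) by simp
    also have "\<dots> = (\<Prod>i\<in>I. measure \<mu> Q)"
    proof (rule prod.cong)
      fix i assume i: "i \<in> I"
      have "measure \<mu> Q = measure (distr M borel (X i)) Q" using mu_eq i I(4) by auto
      also have "\<dots> = prob (X i -` Q \<inter> space M)" by (rule measure_distr[OF rvI[OF i]]) (use Q(1) in simp)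
      finally show "prob (X i -` Q \<inter> space M) = measure \<mu> Q" by simp
    qed simp
    finally show ?thesis using cardI by simp
  qed
  have UB: "(\<Union>k\<in>I. A k) \<subseteq> B" unfolding A_def B_def using Q(2) by (auto intro: less_imp_le)
  define E where "E p = {\<omega> \<in> space M. X (fst p) \<omega> = X (snd p) \<omega>}" for p
  define P where "P = {p \<in> I \<times> I. fst p \<noteq> snd p}"
  have Ev: "E p \<in> events" if "p \<in> P" for p
    using that rvI unfolding E_def P_def by (auto intro!: borel_measurable_eq)
  have tie: "prob (E p) = 0" if pP: "p \<in> P" for p
  proof -
    obtain i j where p: "p = (i, j)" "i \<in> I" "j \<in> I" "i \<noteq> j" using pP unfolding P_def by (cases p) auto
    have "indep_var borel ((\<lambda>f. f i) \<circ> (\<lambda>\<omega>. restrict (\<lambda>i. X i \<omega>) {i}))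
                    borel ((\<lambda>f. f j) \<circ> (\<lambda>\<omega>. restrict (\<lambda>i. X i \<omega>) {j}))"
      using p by (intro indep_var_compose[OF indep_var_restrict[OF indI]]) auto
    also have "((\<lambda>f. f i) \<circ> (\<lambda>\<omega>. restrict (\<lambda>i. X i \<omega>) {i})) = X i" by auto
    also have "((\<lambda>f. f j) \<circ> (\<lambda>\<omega>. restrict (\<lambda>i. X i \<omega>) {j})) = X j" by auto
    finally have iv: "indep_var borel (X i) borel (X j)" .
    then have pm: "\<mu> \<Otimes>\<^sub>M \<mu> = distr M (borel \<Otimes>\<^sub>M borel) (\<lambda>x. (X i x, X j x))"
    proof -
      have "i \<ge> 1" "j \<ge> 1" using p I(4) by auto
      then have "distr M borel (X i) = \<mu>" "distr M borel (X j) = \<mu>" using mu_eq by auto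
      then show ?thesis using iv unfolding indep_var_distribution_eq by metis
    qed
    define D where "D = {q :: real \<times> real. fst q = snd q}"
    have Dsets: "D \<in> sets (borel \<Otimes>\<^sub>M borel)"
    proof -
      have "{q \<in> space (borel \<Otimes>\<^sub>M borel). fst q = (snd q :: real)} \<in> sets (borel \<Otimes>\<^sub>M borel)"
        by measurable
      then show ?thesis unfolding D_def by (simp add: space_pair_measure)
    qed
    have pmeas: "(\<lambda>x. (X i x, X j x)) \<in> measurable M (borel \<Otimes>\<^sub>M borel)"
      using rvI p by (auto intro!: measurable_Pair)
    have "prob (E p) = measure (distr M (borel \<Otimes>\<^sub>M borel) (\<lambda>x. (X i x, X j x))) D"
      by (subst measure_distr[OF pmeas Dsets]) (auto simp: E_def D_def p intro!: arg_cong[where f=prob])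
    also have "\<dots> = measure (\<mu> \<Otimes>\<^sub>M \<mu>) D" using pm by simp
    also have "\<dots> = 0"
    proof -
    have "emeasure (\<mu> \<Otimes>\<^sub>M \<mu>) D = (\<integral>\<^sup>+x. emeasure \<mu> (Pair x -` D) \<partial>\<mu>)"
      by (rule mu.emeasure_pair_measure_alt) (use Dsets in \<open>simp add: sets_pair_measure_cong[OF mu.events_eq_borel mu.events_eq_borel]\<close>)
    also have "\<dots> = (\<integral>\<^sup>+x. 0 \<partial>\<mu>)"
      by (rule nn_integral_cong) (simp add: D_def vimage_def mu.emeasure_eq_measure atom)
    finally show ?thesis by (simp add: measure_def)
    qed
    finally show ?thesis .
  qed
  define T where "T = (\<Union>p\<in>P. E p)"
  have finP: "finite P" unfolding P_def using I(1) by auto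
  have Tev: "T \<in> events" unfolding T_def using finP Ev by auto
  have T0: "prob T = 0"
  proof -
    have "prob T \<le> (\<Sum>p\<in>P. prob (E p))"
      unfolding T_def by (rule finite_measure_subadditive_finite[OF finP]) (use Ev in auto)
    then show ?thesis using tie by (simp add: measure_nonneg antisym)
  qed
  have BUT: "B \<subseteq> (\<Union>k\<in>I. A k) \<union> T"
  proof
    fix \<omega> assume w: "\<omega> \<in> B"
    show "\<omega> \<in> (\<Union>k\<in>I. A k) \<union> T"
    proof (cases "\<omega> \<in> T")
      case False
      define m where "m = Max ((\<lambda>i. X i \<omega>) ` I)"
      have "m \<in> (\<lambda>i. X i \<omega>) ` I" unfolding m_def using I by (intro Max_in) auto
      then obtain k where k: "k \<in> I" "X k \<omega> = m" by auto
      have le: "X i \<omega> \<le> X k \<omega>" if "i \<in> I" for i using k I(1) that unfolding m_def by auto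
      have ne: "X i \<omega> \<noteq> X k \<omega>" if "i \<in> I" "i \<noteq> k" for i
        using False that k w unfolding T_def E_def P_def B_def by auto
      have "\<omega> \<in> A k" using w k le ne unfolding A_def B_def by (auto simp: order.not_eq_order_implies_strict)
      then show ?thesis using k by auto
    qed auto
  qed
  have Bev: "B \<in> events"
  proof -
    have "B = (\<Inter>i\<in>I. X i -` Q \<inter> space M)" unfolding B_def using I(2) by auto
    then show ?thesis using I(1,2) rvI Q(1) by (auto intro!: sets.finite_INT measurable_sets)
  qed
  have "prob B \<le> prob ((\<Union>k\<in>I. A k) \<union> T)"
    by (rule finite_measure_mono[OF BUT]) (use Aev Tev I(1) in auto)
  also have "\<dots> \<le> prob (\<Union>k\<in>I. A k) + prob T"
    by (rule measure_Un_le) (use Aev Tev I(1) in auto)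
  finally have 1: "prob B \<le> n * prob (A n)" using U T0 by simp
  have 2: "n * prob (A n) \<le> prob B" using U finite_measure_mono[OF UB Bev] by simp
  have "n * prob (A n) = measure \<mu> Q ^ n" using 1 2 Bq by simp
  then show ?thesis using n unfolding A_def \<mu>_def I_def by (simp add: field_simps)
qed
theorem lemma7:
  fixes M :: "'a measure" and X :: "nat \<Rightarrow> 'a \<Rightarrow> real"
    and F G :: "real \<Rightarrow> real" and a b :: "nat \<Rightarrow> real" and x :: real
  assumes "prob_space M"
    and "\<And>i. i \<ge> 1 \<Longrightarrow> X i \<in> borel_measurable M"
    and "prob_space.indep_vars M (\<lambda>_. borel) X {1..}"
    and "\<And>i t. i \<ge> 1 \<Longrightarrow> F t = measure M {\<omega> \<in> space M. X i \<omega> \<le> t}"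
    and "continuous_on UNIV F"
    and "max_domain_attraction F G a b"
    and "isCont G x"
  shows "(\<lambda>n. measure M {\<omega> \<in> space M. (X n \<omega> - b n) / a n \<le> x \<and> is_record X n \<omega>}
              / measure M {\<omega> \<in> space M. is_record X n \<omega>}) \<longlonglongrightarrow> G x"
proof -
  interpret prob_space M by fact
  have an: "\<And>n. a n > 0" and lim: "(\<lambda>n. F (a n * x + b n) ^ n) \<longlonglongrightarrow> G x"
    using assms(6,7) unfolding max_domain_attraction_def by auto
  have rv1: "X 1 \<in> borel_measurable M" using assms(2) by simp
  have q1: "measure (distr M borel (X 1)) {..t} = F t" for t
    using rv1 assms(4)[of 1 t] by (subst measure_distr) (auto simp: vimage_def Int_def intro!: arg_cong[where f=prob])
  have q2: "measure (distr M borel (X 1)) UNIV = 1"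
  proof -
    interpret d: prob_space "distr M borel (X 1)" using rv1 by (rule prob_space_distr)
    show ?thesis using d.prob_space by simp
  qed
  have eq: "measure M {\<omega> \<in> space M. (X n \<omega> - b n) / a n \<le> x \<and> is_record X n \<omega>}
              / measure M {\<omega> \<in> space M. is_record X n \<omega>} = F (a n * x + b n) ^ n" if n: "n \<ge> 1" for n
  proof -
    have r: "is_record X n \<omega> \<longleftrightarrow> (\<forall>i\<in>{1..n}. i \<noteq> n \<longrightarrow> X i \<omega> < X n \<omega>)" for \<omega>
      unfolding is_record_def by auto
    have le: "(X n \<omega> - b n) / a n \<le> x \<longleftrightarrow> X n \<omega> \<in> {..a n * x + b n}" for \<omega>
      using an[of n] by (auto simp: pos_divide_le_eq algebra_simps)
    have num: "measure M {\<omega> \<in> space M. (X n \<omega> - b n) / a n \<le> x \<and> is_record X n \<omega>} = F (a n * x + b n) ^ n / n"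
      unfolding r le
      using key[OF assms(1-5), of "{..a n * x + b n}" n] n q1 by auto
    have den: "measure M {\<omega> \<in> space M. is_record X n \<omega>} = 1 / n"
      using key[OF assms(1-5), of UNIV n] n q2 unfolding r by auto
    show ?thesis unfolding num den using n by simp
  qed
  have "\<forall>\<^sub>F n in sequentially. F (a n * x + b n) ^ n = measure M {\<omega> \<in> space M. (X n \<omega> - b n) / a n \<le> x \<and> is_record X n \<omega>}
              / measure M {\<omega> \<in> space M. is_record X n \<omega>}"
    using eq by (auto simp: eventually_sequentially intro!: exI[of _ 1])
  then show ?thesis using lim by (rule Lim_transform_eventually[rotated])
qed

end
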